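(* Let $K\in\{\mathbb R,\mathbb C,\mathbb H\}$ and let $(E,d)$ be a metric vector space over $K$ such that $d$ is $C_0$-translation invariant and $(C_1,C_2,C_3)$-lipschitz multiplicative. Let $d_0(x,y)=\int_{\mathbb U}d(ux,uy)\,d\mu(u)$, $\delta_0(x,y)=\lim_{n\to\infty}\frac1n d_0(nx,ny)$, let $E_0$ be the maximal linear subspace of $E$ on which $d$ is bounded, let $\|\bar x\|=\delta_0(x,0)$ for $\bar x=x+E_0\in E/E_0$, and let $D$, $D_0$ be the Hausdorff distances for $d$, $d_0$ between classes modulo $E_0$. Then the norm $\|\cdot\|$ is $(C_1,C_2+C_3)$-lipschitz equivalent to $D_0$ and $(C_1^2,C_2')$-lipschitz equivalent to $D$, where $C_2'=C_1C_2+C_1C_3+C_2$.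
   Context: A metric vector space is a topological vector space over $K$ whose topology is generated by the metric $d$. $\mathbb U=\{u\in K:|u|=1\}$, $\mu$ the right-invariant Haar probability measure on $\mathbb U$. $d$ is $C_0$-translation invariant if $d(x+z,y+z)\le d(x,y)+C_0$ for all $x,y,z$. $(C_1,C_2,C_3)$-lipschitz multiplicative ($C_1\ge1$, $C_2,C_3\ge0$) means $C_1^{-1}|\lambda|d(x,y)-C_2|\lambda|-C_3\le d(\lambda x,\lambda y)\le C_1|\lambda|d(x,y)+C_2|\lambda|+C_3$ for all $\lambda\in K$, $x,y\in E$. Hausdorff distance between classes for a distance $\rho$: $\max\big(\inf_{x\in x_0+E_0}\sup_{y\in y_0+E_0}\rho(x,y),\ \inf_{y\in y_0+E_0}\sup_{x\in x_0+E_0}\rho(x,y)\big)$. A distance $\rho$ is $(A,B)$-lipschitz equivalent to $\sigma$ if $A^{-1}\sigma-B\le\rho\le A\sigma+B$ pointwise; here the norm is viewed as the distance $(\bar x,\bar y)\mapsto\|\bar x-\bar y\|$. (Under these hypotheses $\delta_0$ exists and $\|\cdot\|$ is a well-defined norm.) *)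

theory Defs
  imports "HOL-Probability.Probability"
begin

text \<open>The scalar field K is modelled as a type 'k of class
  real_normed_div_algebra and euclidean_space: by Frobenius' theorem these are
  exactly R, C, H (up to isomorphism).\<close>

definition metric_vector_space :: "('k::real_normed_div_algebra \<Rightarrow> 'e::{metric_space,ab_group_add} \<Rightarrow> 'e) \<Rightarrow> bool" where
  "metric_vector_space sm \<longleftrightarrow>
     (\<forall>x. sm 1 x = x) \<and>
     (\<forall>a b x. sm (a * b) x = sm a (sm b x)) \<and>
     (\<forall>a b x. sm (a + b) x = sm a x + sm b x) \<and>
     (\<forall>a x y. sm a (x + y) = sm a x + sm a y) \<and>
     continuous_on UNIV (\<lambda>p::'e \<times> 'e. fst p + snd p) \<and>
     continuous_on UNIV (\<lambda>p::'k \<times> 'e. sm (fst p) (snd p))"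

definition translation_invariant :: "real \<Rightarrow> ('e::{metric_space,ab_group_add}) itself \<Rightarrow> bool" where
  "translation_invariant C0 _ \<longleftrightarrow>
     (\<forall>x y z::'e. dist (x + z) (y + z) \<le> dist x y + C0)"

definition lipschitz_multiplicative ::
  "real \<Rightarrow> real \<Rightarrow> real \<Rightarrow> ('k::real_normed_div_algebra \<Rightarrow> 'e::metric_space \<Rightarrow> 'e) \<Rightarrow> bool" where
  "lipschitz_multiplicative C1 C2 C3 sm \<longleftrightarrow> C1 \<ge> 1 \<and> C2 \<ge> 0 \<and> C3 \<ge> 0 \<and>
     (\<forall>c x y. norm c * dist x y / C1 - C2 * norm c - C3 \<le> dist (sm c x) (sm c y) \<and>
              dist (sm c x) (sm c y) \<le> C1 * norm c * dist x y + C2 * norm c + C3)"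

text \<open>mu is the right-invariant Haar probability measure on the unit sphere U of K
  (characterised by being a right-invariant Borel probability measure on U,
  which determines it uniquely).\<close>
definition haar_unit_sphere :: "'k::real_normed_div_algebra measure \<Rightarrow> bool" where
  "haar_unit_sphere \<mu> \<longleftrightarrow> prob_space \<mu> \<and>
     sets \<mu> = sets (restrict_space borel (sphere (0::'k) 1)) \<and>
     space \<mu> = sphere 0 1 \<and>
     (\<forall>v \<in> sphere 0 1. distr \<mu> \<mu> (\<lambda>u. u * v) = \<mu>)"

definition d0 :: "('k::real_normed_div_algebra \<Rightarrow> 'e::metric_space \<Rightarrow> 'e) \<Rightarrow> 'k measure \<Rightarrow> 'e \<Rightarrow> 'e \<Rightarrow> real" where
  "d0 sm \<mu> x y = (\<integral>u. dist (sm u x) (sm u y) \<partial>\<mu>)"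

definition delta0 :: "('k::real_normed_div_algebra \<Rightarrow> 'e::metric_space \<Rightarrow> 'e) \<Rightarrow> 'k measure \<Rightarrow> 'e \<Rightarrow> 'e \<Rightarrow> real" where
  "delta0 sm \<mu> x y = lim (\<lambda>n. d0 sm \<mu> (sm (of_nat n) x) (sm (of_nat n) y) / real n)"

definition ksubspace :: "('k::real_normed_div_algebra \<Rightarrow> 'e::ab_group_add \<Rightarrow> 'e) \<Rightarrow> 'e set \<Rightarrow> bool" where
  "ksubspace sm F \<longleftrightarrow> 0 \<in> F \<and> (\<forall>x\<in>F. \<forall>y\<in>F. x + y \<in> F) \<and> (\<forall>c. \<forall>x\<in>F. sm c x \<in> F)"

definition dist_bounded_on :: "'e::metric_space set \<Rightarrow> bool" where
  "dist_bounded_on F \<longleftrightarrow> (\<exists>B. \<forall>x\<in>F. \<forall>y\<in>F. dist x y \<le> B)"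

definition E0 :: "('k::real_normed_div_algebra \<Rightarrow> 'e::{metric_space,ab_group_add} \<Rightarrow> 'e) \<Rightarrow> 'e set" where
  "E0 sm = (THE F. ksubspace sm F \<and> dist_bounded_on F \<and>
      (\<forall>G. ksubspace sm G \<and> dist_bounded_on G \<longrightarrow> G \<subseteq> F))"

definition hausdorff_cls :: "('e \<Rightarrow> 'e \<Rightarrow> real) \<Rightarrow> 'e::ab_group_add set \<Rightarrow> 'e \<Rightarrow> 'e \<Rightarrow> real" where
  "hausdorff_cls \<rho> F x y = max
     (INF a \<in> (\<lambda>e. x + e) ` F. SUP b \<in> (\<lambda>e. y + e) ` F. \<rho> a b)
     (INF b \<in> (\<lambda>e. y + e) ` F. SUP a \<in> (\<lambda>e. x + e) ` F. \<rho> a b)"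

definition qnorm :: "('k::real_normed_div_algebra \<Rightarrow> 'e::{metric_space,ab_group_add} \<Rightarrow> 'e) \<Rightarrow> 'k measure \<Rightarrow> 'e \<Rightarrow> real" where
  "qnorm sm \<mu> x = delta0 sm \<mu> x 0"

definition lipschitz_equiv :: "real \<Rightarrow> real \<Rightarrow> ('e \<Rightarrow> 'e \<Rightarrow> real) \<Rightarrow> ('e \<Rightarrow> 'e \<Rightarrow> real) \<Rightarrow> bool" where
  "lipschitz_equiv A B \<rho> \<sigma> \<longleftrightarrow> (\<forall>x y. \<sigma> x y / A - B \<le> \<rho> x y \<and> \<rho> x y \<le> A * \<sigma> x y + B)"

end

theory Submission
  imports Defs "HOL-Probability.Probability"
begin

lemma fekete_aux:
  fixes b :: "nat \<Rightarrow> real"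
  assumes sub: "\<And>m n. 0<m \<Longrightarrow> 0<n \<Longrightarrow> b (m+n) \<le> b m + b n"
    and m: "0 < m"
  shows "1 \<le> r \<Longrightarrow> b (q*m + r) \<le> real q * b m + b r"
proof (induction q)
  case 0 then show ?case by simp
next
  case (Suc q)
  have "b (Suc q * m + r) = b (m + (q*m+r))" by (simp add: algebra_simps)
  also have "\<dots> \<le> b m + b (q*m+r)" using sub m Suc.prems by simp
  also have "\<dots> \<le> b m + (real q * b m + b r)" using Suc by simp
  finally show ?case by (simp add: algebra_simps)
qed

lemma fekete:
  fixes b :: "nat \<Rightarrow> real"
  assumes sub: "\<And>m n. 0<m \<Longrightarrow> 0<n \<Longrightarrow> b (m+n) \<le> b m + b n"
    and pos: "\<And>n. 0 < n \<Longrightarrow> 0 \<le> b n"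
  shows "convergent (\<lambda>n. b n / real n)"
proof -
  define S where "S = {b n / real n | n. 0 < n}"
  have Sne: "S \<noteq> {}" unfolding S_def by (auto intro: exI[of _ 1])
  have Sbdd: "bdd_below S" unfolding S_def bdd_below_def using pos by (auto intro!: exI[of _ 0])
  define s where "s = Inf S"
  have low: "s \<le> b n / real n" if "0 < n" for n
    unfolding s_def using Sbdd that by (auto intro!: cInf_lower simp: S_def)
  have "(\<lambda>n. b n / real n) \<longlonglongrightarrow> s"
  proof (rule LIMSEQ_I)
    fix r :: real assume r: "0 < r"
    have "Inf S < s + r/2" using r s_def by simp
    then obtain m where m: "0 < m" "b m / real m < s + r/2"
      using cInf_lessD[OF Sne] unfolding S_def by auto
    define M where "M = (\<Sum>k\<in>{1..m}. b k)"
    have M0: "0 \<le> M" unfolding M_def using pos by (auto intro: sum_nonneg)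
    obtain no :: nat where no: "2*M/r < real no" using reals_Archimedean2 by blast
    have "\<forall>n\<ge>Suc no. norm (b n / real n - s) < r"
    proof (intro allI impI)
      fix n assume n: "Suc no \<le> n"
      then have n0: "0 < n" by simp
      define q where "q = (n - 1) div m"
      define rr where "rr = (n - 1) mod m + 1"
      have "q*m + (n-1) mod m = n - 1" unfolding q_def by (rule div_mult_mod_eq)
      then have nq: "n = q*m + rr" unfolding rr_def using n0 by simp
      have rr1: "1 \<le> rr" "rr \<le> m" unfolding rr_def using m by (auto simp: Suc_le_eq)
      have "b n \<le> real q * b m + b rr" using fekete_aux[OF sub m(1) rr1(1)] nq by simp
      also have "b rr \<le> M" unfolding M_def using rr1 pos
        by (intro member_le_sum) auto
      also have "real q * b m \<le> real n / real m * b m"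
      proof (rule mult_right_mono)
        have "real q * real m \<le> real n" using nq by (metis le_add1 of_nat_le_iff of_nat_mult)
        then show "real q \<le> real n / real m" using m by (simp add: field_simps)
      qed (use pos m in auto)
      finally have "b n \<le> real n / real m * b m + M" by simp
      then have "b n / real n \<le> b m / real m + M / real n" using n0
        by (simp add: field_simps)
      also have "M / real n < r/2"
      proof -
        have "2 * M < r * real no" using no r by (simp add: field_simps)
        also have "\<dots> \<le> r * real n" using n r by simp
        finally show ?thesis using n0 by (simp add: field_simps)
      qed
      finally have "b n / real n < s + r" using m by simp
      then show "norm (b n / real n - s) < r" using low[OF n0] by simp
    qed
    then show "\<exists>no. \<forall>n\<ge>no. norm (b n / real n - s) < r" by blast
  qed
  then show ?thesis by (auto simp: convergent_def)
qed

locale pset =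
  fixes sm :: "'k::{real_normed_div_algebra, euclidean_space} \<Rightarrow> 'e::{metric_space,ab_group_add} \<Rightarrow> 'e"
    and \<mu> :: "'k measure"
    and C0 C1 C2 C3 :: real
  assumes mvs: "metric_vector_space sm"
    and ti: "translation_invariant C0 TYPE('e)"
    and lm: "lipschitz_multiplicative C1 C2 C3 sm"
    and haar: "haar_unit_sphere \<mu>"
begin

lemma sm_one[simp]: "sm 1 x = x" using mvs unfolding metric_vector_space_def by blast
lemma sm_mult: "sm (a * b) x = sm a (sm b x)" using mvs unfolding metric_vector_space_def by blast
lemma sm_addl: "sm (a + b) x = sm a x + sm b x" using mvs unfolding metric_vector_space_def by blast
lemma sm_addr: "sm a (x + y) = sm a x + sm a y" using mvs unfolding metric_vector_space_def by blast
lemma sm_cont: "continuous_on UNIV (\<lambda>p::'k \<times> 'e. sm (fst p) (snd p))"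
  using mvs unfolding metric_vector_space_def by blast

lemma sm_zero_r[simp]: "sm a 0 = 0"
  using sm_addr[of a 0 0] by simp
lemma sm_zero_l[simp]: "sm 0 x = 0"
  using sm_addl[of 0 0 x] by simp
lemma sm_neg: "sm (-1) x = - x"
  using sm_addl[of "-1" 1 x] by (simp add: eq_neg_iff_add_eq_0)
lemma sm_minus: "sm a (x - y) = sm a x - sm a y"
  using sm_addr[of a "x - y" y] by (simp add: eq_diff_eq)

lemma ti': "dist (x + z) (y + z) \<le> dist x y + C0" for x y z :: 'e
  using ti unfolding translation_invariant_def by blast
lemma C0_nonneg: "0 \<le> C0" using ti'[of 0 0 0] by simp

lemma C1: "1 \<le> C1" and C2: "0 \<le> C2" and C3: "0 \<le> C3"
  using lm unfolding lipschitz_multiplicative_def by auto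

lemma lm_up: "dist (sm c x) (sm c y) \<le> C1 * norm c * dist x y + C2 * norm c + C3"
  using lm unfolding lipschitz_multiplicative_def by blast
lemma lm_low: "norm c * dist x y / C1 - C2 * norm c - C3 \<le> dist (sm c x) (sm c y)"
  using lm unfolding lipschitz_multiplicative_def by blast

lemma ps: "prob_space \<mu>" and sp: "space \<mu> = sphere 0 1"
  and sets_mu: "sets \<mu> = sets (restrict_space borel (sphere (0::'k) 1))"
  using haar unfolding haar_unit_sphere_def by auto

lemma cont_u: "continuous_on A (\<lambda>u. sm u x)"
proof -
  have "continuous_on A ((\<lambda>p::'k \<times> 'e. sm (fst p) (snd p)) \<circ> (\<lambda>u. (u, x)))"
    by (rule continuous_on_compose) (auto intro!: continuous_intros continuous_on_subset[OF sm_cont])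
  then show ?thesis by (simp add: o_def)
qed

lemma integ: "integrable \<mu> (\<lambda>u. dist (sm u a) (sm u b))"
proof -
  interpret prob_space \<mu> by (rule ps)
  have "(\<lambda>u. dist (sm u a) (sm u b)) \<in> borel_measurable (restrict_space borel (sphere (0::'k) 1))"
    by (intro borel_measurable_continuous_on_restrict continuous_intros cont_u)
  then have meas: "(\<lambda>u. dist (sm u a) (sm u b)) \<in> borel_measurable \<mu>"
  proof -
    have "\<mu> \<rightarrow>\<^sub>M borel = restrict_space borel (sphere (0::'k) 1) \<rightarrow>\<^sub>M (borel :: real measure)"
      by (rule measurable_cong_sets[OF sets_mu refl])
    then show ?thesis using \<open>_ \<in> borel_measurable (restrict_space borel _)\<close> by simp
  qed
  show ?thesis
  proof (rule integrable_const_bound[where B="C1 * dist a b + C2 + C3"])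
    show "AE x in \<mu>. norm (dist (sm x a) (sm x b)) \<le> C1 * dist a b + C2 + C3"
    proof (intro AE_I2)
      fix x assume "x \<in> space \<mu>"
      then have "norm x = 1" by (simp add: sp)
      then show "norm (dist (sm x a) (sm x b)) \<le> C1 * dist a b + C2 + C3" using lm_up[of x a b] by simp
    qed
  qed (rule meas)
qed

lemma int_lin: "integrable \<mu> g \<Longrightarrow> (\<integral>u. c * g u + k \<partial>\<mu>) = c * (\<integral>u. g u \<partial>\<mu>) + k" for g :: "'k \<Rightarrow> real"
proof -
  assume g: "integrable \<mu> g"
  interpret prob_space \<mu> by (rule ps)
  have i1: "integrable \<mu> (\<lambda>u. c * g u)" using g by (rule integrable_mult_right)
  have i2: "integrable \<mu> (\<lambda>u. k)" by simp
  have "(\<integral>u. c * g u + k \<partial>\<mu>) = (\<integral>u. c * g u \<partial>\<mu>) + (\<integral>u. k \<partial>\<mu>)"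
    by (rule Bochner_Integration.integral_add[OF i1 i2])
  then show ?thesis by (simp add: prob_space)
qed

lemma integ_lin: "integrable \<mu> (\<lambda>u. c * dist (sm u a) (sm u b) + k)"
proof -
  interpret prob_space \<mu> by (rule ps)
  show ?thesis using integ by simp
qed

lemma d0_bound:
  assumes "\<And>u. norm u = 1 \<Longrightarrow> dist (sm u p) (sm u q) \<le> c * dist (sm u a) (sm u b) + k"
  shows "d0 sm \<mu> p q \<le> c * d0 sm \<mu> a b + k"
proof -
  have "d0 sm \<mu> p q \<le> (\<integral>u. c * dist (sm u a) (sm u b) + k \<partial>\<mu>)"
    unfolding d0_def using assms integ integ_lin
    by (intro integral_mono) (auto simp: sp)
  then show ?thesis using int_lin[OF integ] by (simp add: d0_def)
qed

lemma d0_bound_const: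
  assumes "\<And>u. norm u = 1 \<Longrightarrow> dist (sm u p) (sm u q) \<le> k"
  shows "d0 sm \<mu> p q \<le> k"
  using d0_bound[of p q 0 0 0 k] assms by simp

lemma d0_bound_low:
  assumes "\<And>u. norm u = 1 \<Longrightarrow> c * dist (sm u a) (sm u b) + k \<le> dist (sm u p) (sm u q)"
  shows "c * d0 sm \<mu> a b + k \<le> d0 sm \<mu> p q"
proof -
  have "(\<integral>u. c * dist (sm u a) (sm u b) + k \<partial>\<mu>) \<le> d0 sm \<mu> p q"
    unfolding d0_def using assms integ integ_lin
    by (intro integral_mono) (auto simp: sp)
  then show ?thesis using int_lin[OF integ] by (simp add: d0_def)
qed

lemma d0_bound_const_low:
  assumes "\<And>u. norm u = 1 \<Longrightarrow> k \<le> dist (sm u p) (sm u q)"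
  shows "k \<le> d0 sm \<mu> p q"
  using d0_bound_low[of 0 0 0 k p q] assms by simp

lemma d0_nonneg: "0 \<le> d0 sm \<mu> p q"
  by (rule d0_bound_const_low) simp

end

context pset begin

lemma line_bound:
  assumes B: "\<And>n::nat. dist (sm (of_nat n) y) 0 \<le> B"
  shows "dist y 0 \<le> C3"
proof (rule ccontr)
  assume "\<not> dist y 0 \<le> C3"
  then have t: "C3 < dist y 0" by simp
  have B0: "0 \<le> B" using B[of 0] by simp
  define K where "K = C1 * B + C2"
  have K0: "0 \<le> K" unfolding K_def using B0 C1 C2 by simp
  obtain n :: nat where n: "K / (dist y 0 - C3) < real n" using reals_Archimedean2 by blast
  have "0 \<le> K / (dist y 0 - C3)" using K0 t by simp
  with n have n0: "0 < n" by linarith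
  define c where "c = inverse (of_nat n :: 'k)"
  have nc: "norm c = 1 / real n" unfolding c_def by (simp add: norm_inverse divide_inverse)
  have "sm c (sm (of_nat n) y) = y"
    unfolding c_def sm_mult[symmetric] using n0 by simp
  then have "dist y 0 = dist (sm c (sm (of_nat n) y)) (sm c 0)" by simp
  also have "\<dots> \<le> C1 * norm c * dist (sm (of_nat n) y) 0 + C2 * norm c + C3" by (rule lm_up)
  also have "\<dots> \<le> C1 * norm c * B + C2 * norm c + C3"
    using B[of n] C1 C2 by (intro add_mono mult_left_mono) (auto simp: nc)
  also have "\<dots> = K / real n + C3" unfolding K_def nc by (simp add: field_simps add_divide_distrib)
  finally have "dist y 0 - C3 \<le> K / real n" by simp
  moreover have "K / real n < dist y 0 - C3" using n t n0 by (simp add: field_simps)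
  ultimately show False by simp
qed

definition Fs where "Fs = {x. \<forall>c. dist (sm c x) 0 \<le> C3}"

lemma Fs_smul: "x \<in> Fs \<Longrightarrow> sm c x \<in> Fs"
  unfolding Fs_def by (simp add: sm_mult[symmetric])

lemma dist_add0: "dist (p + q) 0 \<le> dist p 0 + C0 + dist q 0" for p q :: 'e
proof -
  have "dist (p + q) 0 \<le> dist (p + q) (0 + q) + dist q 0" by (simp add: dist_triangle)
  also have "dist (p + q) (0 + q) \<le> dist p 0 + C0" by (rule ti')
  finally show ?thesis by simp
qed

lemma Fs_add: assumes "x \<in> Fs" "y \<in> Fs" shows "x + y \<in> Fs"
  unfolding Fs_def
proof (intro CollectI allI)
  fix c
  show "dist (sm c (x + y)) 0 \<le> C3"
  proof (rule line_bound[where B="C3 + C0 + C3"])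
    fix n :: nat
    have "sm (of_nat n) (sm c (x + y)) = sm (of_nat n * c) x + sm (of_nat n * c) y"
      by (simp add: sm_mult sm_addr)
    then have "dist (sm (of_nat n) (sm c (x + y))) 0 \<le> dist (sm (of_nat n * c) x) 0 + C0 + dist (sm (of_nat n * c) y) 0"
      using dist_add0 by simp
    also have "\<dots> \<le> C3 + C0 + C3" using assms unfolding Fs_def by (intro add_mono) auto
    finally show "dist (sm (of_nat n) (sm c (x + y))) 0 \<le> C3 + C0 + C3" .
  qed
qed

lemma Fs_sub: "ksubspace sm Fs"
  unfolding ksubspace_def using Fs_add Fs_smul C3 by (auto simp: Fs_def)

lemma Fs_diff: "x \<in> Fs \<Longrightarrow> y \<in> Fs \<Longrightarrow> x - y \<in> Fs"
  using Fs_add[of x "sm (-1) y"] Fs_smul[of y "-1"] by (simp add: sm_neg)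

lemma Fs_bdd: "dist_bounded_on Fs"
  unfolding dist_bounded_on_def
proof (intro exI ballI)
  fix a b assume ab: "a \<in> Fs" "b \<in> Fs"
  have "dist a b = dist ((a - b) + b) (0 + b)" by simp
  also have "\<dots> \<le> dist (a - b) 0 + C0" by (rule ti')
  also have "dist (a - b) 0 \<le> C3"
  proof -
    have "\<forall>c. dist (sm c (a - b)) 0 \<le> C3" using Fs_diff[OF ab] by (simp add: Fs_def)
    from this[rule_format, of 1] show ?thesis by simp
  qed
  finally show "dist a b \<le> C3 + C0" by simp
qed

lemma Fs_max: assumes "ksubspace sm G" "dist_bounded_on G" shows "G \<subseteq> Fs"
proof
  fix x assume x: "x \<in> G"
  obtain B where B: "\<forall>a\<in>G. \<forall>b\<in>G. dist a b \<le> B" using assms(2) unfolding dist_bounded_on_def by blast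
  have G: "0 \<in> G" "\<And>c y. y \<in> G \<Longrightarrow> sm c y \<in> G" using assms(1) unfolding ksubspace_def by auto
  show "x \<in> Fs" unfolding Fs_def
  proof (intro CollectI allI)
    fix c
    show "dist (sm c x) 0 \<le> C3"
    proof (rule line_bound[where B=B])
      fix n :: nat
      have "sm (of_nat n) (sm c x) \<in> G" using G x by blast
      then show "dist (sm (of_nat n) (sm c x)) 0 \<le> B" using B G(1) by blast
    qed
  qed
qed

lemma E0_eq: "E0 sm = Fs"
  unfolding E0_def
proof (rule the_equality)
  show "ksubspace sm Fs \<and> dist_bounded_on Fs \<and> (\<forall>G. ksubspace sm G \<and> dist_bounded_on G \<longrightarrow> G \<subseteq> Fs)"
    using Fs_sub Fs_bdd Fs_max by blast
  fix F assume F: "ksubspace sm F \<and> dist_bounded_on F \<and> (\<forall>G. ksubspace sm G \<and> dist_bounded_on G \<longrightarrow> G \<subseteq> F)"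
  then have "Fs \<subseteq> F" using Fs_sub Fs_bdd by blast
  moreover have "F \<subseteq> Fs" using F Fs_max by blast
  ultimately show "F = Fs" by blast
qed

end

lemma sup_bounds:
  fixes f :: "'a \<Rightarrow> real"
  assumes "Y \<noteq> {}" "\<And>b. b \<in> Y \<Longrightarrow> L \<le> f b \<and> f b \<le> U"
  shows "L \<le> (SUP b\<in>Y. f b) \<and> (SUP b\<in>Y. f b) \<le> U"
proof
  obtain b0 where b0: "b0 \<in> Y" using assms(1) by blast
  have bdd: "bdd_above (f ` Y)" using assms(2) by (auto intro!: bdd_aboveI[of _ U])
  have "L \<le> f b0" using assms(2)[OF b0] by simp
  also have "f b0 \<le> (SUP b\<in>Y. f b)" by (rule cSUP_upper[OF b0 bdd])
  finally show "L \<le> (SUP b\<in>Y. f b)" .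
  show "(SUP b\<in>Y. f b) \<le> U" using assms by (intro cSUP_least) auto
qed

lemma inf_bounds:
  fixes f :: "'a \<Rightarrow> real"
  assumes "Y \<noteq> {}" "\<And>b. b \<in> Y \<Longrightarrow> L \<le> f b \<and> f b \<le> U"
  shows "L \<le> (INF b\<in>Y. f b) \<and> (INF b\<in>Y. f b) \<le> U"
proof
  obtain b0 where b0: "b0 \<in> Y" using assms(1) by blast
  have bdd: "bdd_below (f ` Y)" using assms(2) by (auto intro!: bdd_belowI[of _ L])
  have "(INF b\<in>Y. f b) \<le> f b0" by (rule cINF_lower[OF bdd b0])
  also have "f b0 \<le> U" using assms(2)[OF b0] by simp
  finally show "(INF b\<in>Y. f b) \<le> U" .
  show "L \<le> (INF b\<in>Y. f b)" using assms by (intro cINF_greatest) auto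
qed

lemma haus_bounds:
  fixes \<rho> :: "'e::ab_group_add \<Rightarrow> 'e \<Rightarrow> real"
  assumes "0 \<in> F" "\<And>a b. a \<in> (\<lambda>e. x+e)`F \<Longrightarrow> b \<in> (\<lambda>e. y+e)`F \<Longrightarrow> L \<le> \<rho> a b \<and> \<rho> a b \<le> U"
  shows "L \<le> hausdorff_cls \<rho> F x y \<and> hausdorff_cls \<rho> F x y \<le> U"
proof -
  have ne: "(\<lambda>e. x+e)`F \<noteq> {}" "(\<lambda>e. y+e)`F \<noteq> {}" using assms(1) by auto
  have 1: "L \<le> (INF a \<in> (\<lambda>e. x + e) ` F. SUP b \<in> (\<lambda>e. y + e) ` F. \<rho> a b) \<and>
     (INF a \<in> (\<lambda>e. x + e) ` F. SUP b \<in> (\<lambda>e. y + e) ` F. \<rho> a b) \<le> U"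
    by (intro inf_bounds ne sup_bounds assms(2)) auto
  have 2: "L \<le> (INF b \<in> (\<lambda>e. y + e) ` F. SUP a \<in> (\<lambda>e. x + e) ` F. \<rho> a b) \<and>
     (INF b \<in> (\<lambda>e. y + e) ` F. SUP a \<in> (\<lambda>e. x + e) ` F. \<rho> a b) \<le> U"
    by (intro inf_bounds ne sup_bounds assms(2)) auto
  show ?thesis unfolding hausdorff_cls_def using 1 2 by auto
qed

lemma close_lim:
  fixes f g :: "nat \<Rightarrow> real"
  assumes "\<And>n. \<bar>f n - g n\<bar> \<le> K" "(\<lambda>n. g n / real n) \<longlonglongrightarrow> L"
  shows "(\<lambda>n. f n / real n) \<longlonglongrightarrow> L"
proof (rule real_tendsto_sandwich)
  show "\<forall>\<^sub>F n in sequentially. g n / real n - K / real n \<le> f n / real n"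
    unfolding eventually_sequentially
  proof (intro exI[of _ 1] allI impI)
    fix n :: nat assume "1 \<le> n"
    then show "g n / real n - K / real n \<le> f n / real n"
      using assms(1)[of n] by (simp add: diff_divide_distrib[symmetric] divide_right_mono)
  qed
  show "\<forall>\<^sub>F n in sequentially. f n / real n \<le> g n / real n + K / real n"
    unfolding eventually_sequentially
  proof (intro exI[of _ 1] allI impI)
    fix n :: nat assume "1 \<le> n"
    then show "f n / real n \<le> g n / real n + K / real n"
      using assms(1)[of n] by (simp add: add_divide_distrib[symmetric] divide_right_mono)
  qed
  show "(\<lambda>n. g n / real n - K / real n) \<longlonglongrightarrow> L"
    using tendsto_diff[OF assms(2) lim_const_over_n[of K]] by simp
  show "(\<lambda>n. g n / real n + K / real n) \<longlonglongrightarrow> L"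
    using tendsto_add[OF assms(2) lim_const_over_n[of K]] by simp
qed

context pset begin

lemma d0_bound2:
  assumes "\<And>u. norm u = 1 \<Longrightarrow> dist (sm u p) (sm u q) \<le> dist (sm u a) (sm u b) + dist (sm u a') (sm u b') + k"
  shows "d0 sm \<mu> p q \<le> d0 sm \<mu> a b + d0 sm \<mu> a' b' + k"
proof -
  interpret prob_space \<mu> by (rule ps)
  have i: "integrable \<mu> (\<lambda>u. dist (sm u a) (sm u b) + dist (sm u a') (sm u b'))"
    using integ by simp
  have "d0 sm \<mu> p q \<le> (\<integral>u. 1 * (dist (sm u a) (sm u b) + dist (sm u a') (sm u b')) + k \<partial>\<mu>)"
    unfolding d0_def using assms integ i
    by (intro integral_mono) (auto simp: sp)
  also have "\<dots> = (\<integral>u. dist (sm u a) (sm u b) + dist (sm u a') (sm u b') \<partial>\<mu>) + k"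
    using int_lin[OF i, of 1 k] by simp
  also have "(\<integral>u. dist (sm u a) (sm u b) + dist (sm u a') (sm u b') \<partial>\<mu>) = d0 sm \<mu> a b + d0 sm \<mu> a' b'"
    unfolding d0_def by (rule Bochner_Integration.integral_add[OF integ integ])
  finally show ?thesis .
qed

lemma d0_sub: "d0 sm \<mu> (sm (of_nat (m+n)) z) 0 \<le> d0 sm \<mu> (sm (of_nat m) z) 0 + d0 sm \<mu> (sm (of_nat n) z) 0 + C0"
proof (rule d0_bound2)
  fix u :: 'k
  have "sm u (sm (of_nat (m+n)) z) = sm u (sm (of_nat m) z) + sm u (sm (of_nat n) z)"
    by (simp add: sm_addl sm_addr)
  then show "dist (sm u (sm (of_nat (m+n)) z)) (sm u 0) \<le> dist (sm u (sm (of_nat m) z)) (sm u 0) + dist (sm u (sm (of_nat n) z)) (sm u 0) + C0"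
    using dist_add0[of "sm u (sm (of_nat m) z)" "sm u (sm (of_nat n) z)"] by simp
qed

definition N where "N z = lim (\<lambda>n. d0 sm \<mu> (sm (of_nat n) z) 0 / real n)"

lemma N_lim: "(\<lambda>n. d0 sm \<mu> (sm (of_nat n) z) 0 / real n) \<longlonglongrightarrow> N z"
proof -
  define b where "b n = d0 sm \<mu> (sm (of_nat n) z) 0 + C0" for n
  have "convergent (\<lambda>n. b n / real n)"
  proof (rule fekete)
    fix m n :: nat
    show "b (m+n) \<le> b m + b n" unfolding b_def using d0_sub[of m n z] by simp
  next
    fix n :: nat show "0 \<le> b n" unfolding b_def using d0_nonneg C0_nonneg by (simp add: add_nonneg_nonneg)
  qed
  then obtain L where L: "(\<lambda>n. b n / real n) \<longlonglongrightarrow> L" by (auto simp: convergent_def)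
  have "(\<lambda>n. b n / real n - C0 / real n) \<longlonglongrightarrow> L - 0"
    by (intro tendsto_diff L lim_const_over_n)
  then have "(\<lambda>n. d0 sm \<mu> (sm (of_nat n) z) 0 / real n) \<longlonglongrightarrow> L"
    unfolding b_def by (simp add: diff_divide_distrib[symmetric])
  then show ?thesis unfolding N_def by (simp add: limI)
qed

lemma d0_abs:
  assumes "\<And>u. norm u = 1 \<Longrightarrow> \<bar>dist (sm u p) (sm u q) - dist (sm u a) (sm u b)\<bar> \<le> k"
  shows "\<bar>d0 sm \<mu> p q - d0 sm \<mu> a b\<bar> \<le> k"
proof -
  have "d0 sm \<mu> p q \<le> 1 * d0 sm \<mu> a b + k"
    by (rule d0_bound) (use assms in force)
  moreover have "1 * d0 sm \<mu> a b + (- k) \<le> d0 sm \<mu> p q"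
    by (rule d0_bound_low) (use assms in force)
  ultimately show ?thesis by simp
qed

lemma seq_diff: "\<bar>d0 sm \<mu> (sm (of_nat n) a) (sm (of_nat n) b) - d0 sm \<mu> (sm (of_nat n) (a - b)) 0\<bar> \<le> C0"
proof (rule d0_abs)
  fix u :: 'k
  define P where "P = sm u (sm (of_nat n) (a - b))"
  define Q where "Q = sm u (sm (of_nat n) b)"
  have a: "sm u (sm (of_nat n) a) = P + Q" unfolding P_def Q_def
    by (simp add: sm_addr[symmetric])
  have 1: "dist (P + Q) (0 + Q) \<le> dist P 0 + C0" by (rule ti')
  have 2: "dist ((P + Q) + (-Q)) (Q + (-Q)) \<le> dist (P + Q) Q + C0" by (rule ti')
  show "\<bar>dist (sm u (sm (of_nat n) a)) (sm u (sm (of_nat n) b)) - dist (sm u (sm (of_nat n) (a - b))) (sm u 0)\<bar> \<le> C0"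
    using 1 2 unfolding a by (simp add: P_def[symmetric] Q_def[symmetric] abs_le_iff)
qed

lemma delta0_lim: "(\<lambda>n. d0 sm \<mu> (sm (of_nat n) a) (sm (of_nat n) b) / real n) \<longlonglongrightarrow> N (a - b)"
  by (rule close_lim[OF seq_diff N_lim])

lemma delta0_eq: "delta0 sm \<mu> a b = N (a - b)"
  unfolding delta0_def using delta0_lim by (rule limI)

lemma qnorm_eq: "qnorm sm \<mu> z = N z"
  unfolding qnorm_def delta0_eq by simp

lemma N_inv: assumes e: "e \<in> Fs" shows "N (z + e) = N z"
proof -
  have "\<bar>d0 sm \<mu> (sm (of_nat n) (z + e)) (sm (of_nat n) 0) - d0 sm \<mu> (sm (of_nat n) (z + e)) (sm (of_nat n) e)\<bar> \<le> C3" for n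
  proof (rule d0_abs)
    fix u :: 'k
    define P where "P = sm u (sm (of_nat n) (z + e))"
    define R where "R = sm u (sm (of_nat n) e)"
    have "dist R 0 \<le> C3" using e unfolding R_def Fs_def by (simp add: sm_mult[symmetric])
    moreover have "dist P 0 \<le> dist P R + dist R 0" by (rule dist_triangle)
    moreover have "dist P R \<le> dist P 0 + dist R 0" by (metis dist_commute dist_triangle)
    ultimately show "\<bar>dist (sm u (sm (of_nat n) (z + e))) (sm u (sm (of_nat n) 0)) - dist (sm u (sm (of_nat n) (z + e))) (sm u (sm (of_nat n) e))\<bar> \<le> C3"
      by (simp add: P_def[symmetric] R_def[symmetric] abs_le_iff)
  qed
  from close_lim[OF this delta0_lim[of "z+e" e]]
  have "(\<lambda>n. d0 sm \<mu> (sm (of_nat n) (z + e)) (sm (of_nat n) 0) / real n) \<longlonglongrightarrow> N z" by simp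
  moreover have "(\<lambda>n. d0 sm \<mu> (sm (of_nat n) (z + e)) (sm (of_nat n) 0) / real n) \<longlonglongrightarrow> N (z + e)"
    using delta0_lim[of "z+e" 0] by simp
  ultimately show ?thesis using LIMSEQ_unique by blast
qed

end

lemma lim_upper:
  fixes f :: "nat \<Rightarrow> real"
  assumes "\<And>n. 1 \<le> n \<Longrightarrow> f n \<le> A * real n + K" "(\<lambda>n. f n / real n) \<longlonglongrightarrow> L"
  shows "L \<le> A"
proof (rule LIMSEQ_le[OF assms(2)])
  show "(\<lambda>n. A + K / real n) \<longlonglongrightarrow> A" using tendsto_add[OF tendsto_const lim_const_over_n[of K]] by simp
  show "\<exists>N. \<forall>n\<ge>N. f n / real n \<le> A + K / real n"
  proof (intro exI[of _ 1] allI impI)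
    fix n :: nat assume n: "1 \<le> n"
    then have "f n / real n \<le> (A * real n + K) / real n" using assms(1)[OF n] by (simp add: divide_right_mono)
    also have "\<dots> = A + K / real n" using n by (simp add: field_simps)
    finally show "f n / real n \<le> A + K / real n" .
  qed
qed

lemma lim_lower:
  fixes f :: "nat \<Rightarrow> real"
  assumes "\<And>n. 1 \<le> n \<Longrightarrow> A * real n + K \<le> f n" "(\<lambda>n. f n / real n) \<longlonglongrightarrow> L"
  shows "A \<le> L"
proof (rule LIMSEQ_le[OF _ assms(2)])
  show "(\<lambda>n. A + K / real n) \<longlonglongrightarrow> A" using tendsto_add[OF tendsto_const lim_const_over_n[of K]] by simp
  show "\<exists>N. \<forall>n\<ge>N. A + K / real n \<le> f n / real n"
  proof (intro exI[of _ 1] allI impI)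
    fix n :: nat assume n: "1 \<le> n"
    have "A + K / real n = (A * real n + K) / real n" using n by (simp add: field_simps)
    also have "\<dots> \<le> f n / real n" using assms(1)[OF n] by (simp add: divide_right_mono)
    finally show "A + K / real n \<le> f n / real n" .
  qed
qed

context pset begin

lemma comm_n: "sm u (sm (of_nat n) a) = sm (of_nat n) (sm u a)"
  by (simp add: sm_mult[symmetric] mult_of_nat_commute)

lemma delta_d0_up: "delta0 sm \<mu> a b \<le> C1 * d0 sm \<mu> a b + C2"
proof (rule lim_upper)
  show "(\<lambda>n. d0 sm \<mu> (sm (of_nat n) a) (sm (of_nat n) b) / real n) \<longlonglongrightarrow> delta0 sm \<mu> a b"
    unfolding delta0_eq by (rule delta0_lim)
  fix n :: nat
  have "d0 sm \<mu> (sm (of_nat n) a) (sm (of_nat n) b) \<le> (C1 * real n) * d0 sm \<mu> a b + (C2 * real n + C3)"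
  proof (rule d0_bound)
    fix u :: 'k
    show "dist (sm u (sm (of_nat n) a)) (sm u (sm (of_nat n) b)) \<le> C1 * real n * dist (sm u a) (sm u b) + (C2 * real n + C3)"
      unfolding comm_n using lm_up[of "of_nat n" "sm u a" "sm u b"] by simp
  qed
  then show "d0 sm \<mu> (sm (of_nat n) a) (sm (of_nat n) b) \<le> (C1 * d0 sm \<mu> a b + C2) * real n + C3"
    by (simp add: algebra_simps)
qed

lemma delta_d0_low: "d0 sm \<mu> a b / C1 - C2 \<le> delta0 sm \<mu> a b"
proof (rule lim_lower)
  show "(\<lambda>n. d0 sm \<mu> (sm (of_nat n) a) (sm (of_nat n) b) / real n) \<longlonglongrightarrow> delta0 sm \<mu> a b"
    unfolding delta0_eq by (rule delta0_lim)
  fix n :: nat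
  have "(real n / C1) * d0 sm \<mu> a b + (- C2 * real n - C3) \<le> d0 sm \<mu> (sm (of_nat n) a) (sm (of_nat n) b)"
  proof (rule d0_bound_low)
    fix u :: 'k
    show "(real n / C1) * dist (sm u a) (sm u b) + (- C2 * real n - C3) \<le> dist (sm u (sm (of_nat n) a)) (sm u (sm (of_nat n) b))"
      unfolding comm_n using lm_low[of "of_nat n" "sm u a" "sm u b"] by (simp add: algebra_simps)
  qed
  then show "(d0 sm \<mu> a b / C1 - C2) * real n + (- C3) \<le> d0 sm \<mu> (sm (of_nat n) a) (sm (of_nat n) b)"
    by (simp add: algebra_simps)
qed

lemma delta_d_up: "delta0 sm \<mu> a b \<le> C1^2 * dist a b + C1 * C2"
proof (rule lim_upper)
  show "(\<lambda>n. d0 sm \<mu> (sm (of_nat n) a) (sm (of_nat n) b) / real n) \<longlonglongrightarrow> delta0 sm \<mu> a b"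
    unfolding delta0_eq by (rule delta0_lim)
  fix n :: nat
  show "d0 sm \<mu> (sm (of_nat n) a) (sm (of_nat n) b) \<le> (C1^2 * dist a b + C1 * C2) * real n + (C1 * C3 + C2 + C3)"
  proof (rule d0_bound_const)
    fix u :: 'k assume u: "norm u = 1"
    have "dist (sm u (sm (of_nat n) a)) (sm u (sm (of_nat n) b)) \<le> C1 * dist (sm (of_nat n) a) (sm (of_nat n) b) + C2 + C3"
      using lm_up[of u "sm (of_nat n) a" "sm (of_nat n) b"] u by simp
    also have "dist (sm (of_nat n) a) (sm (of_nat n) b) \<le> C1 * real n * dist a b + C2 * real n + C3"
      using lm_up[of "of_nat n" a b] by simp
    finally show "dist (sm u (sm (of_nat n) a)) (sm u (sm (of_nat n) b)) \<le> (C1^2 * dist a b + C1 * C2) * real n + (C1 * C3 + C2 + C3)"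
      using C1 by (simp add: algebra_simps power2_eq_square)
  qed
qed

lemma delta_d_low: "dist a b / C1^2 - C2 / C1 \<le> delta0 sm \<mu> a b"
proof (rule lim_lower)
  show "(\<lambda>n. d0 sm \<mu> (sm (of_nat n) a) (sm (of_nat n) b) / real n) \<longlonglongrightarrow> delta0 sm \<mu> a b"
    unfolding delta0_eq by (rule delta0_lim)
  fix n :: nat
  show "(dist a b / C1^2 - C2 / C1) * real n + (- (C3 / C1 + C2 + C3)) \<le> d0 sm \<mu> (sm (of_nat n) a) (sm (of_nat n) b)"
  proof (rule d0_bound_const_low)
    fix u :: 'k assume u: "norm u = 1"
    have c1: "0 < C1" using C1 by simp
    have 1: "real n * dist a b / C1 - C2 * real n - C3 \<le> dist (sm (of_nat n) a) (sm (of_nat n) b)"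
      using lm_low[of "of_nat n" a b] by simp
    have 2: "dist (sm (of_nat n) a) (sm (of_nat n) b) / C1 - C2 - C3 \<le> dist (sm u (sm (of_nat n) a)) (sm u (sm (of_nat n) b))"
      using lm_low[of u "sm (of_nat n) a" "sm (of_nat n) b"] u by simp
    have 3: "(real n * dist a b / C1 - C2 * real n - C3) / C1 \<le> dist (sm (of_nat n) a) (sm (of_nat n) b) / C1"
      using 1 c1 by (simp add: divide_right_mono)
    have "(dist a b / C1^2 - C2 / C1) * real n + (- (C3 / C1 + C2 + C3)) = (real n * dist a b / C1 - C2 * real n - C3) / C1 - C2 - C3"
      using c1 by (simp add: field_simps power2_eq_square)
    also have "\<dots> \<le> dist (sm u (sm (of_nat n) a)) (sm u (sm (of_nat n) b))" using 2 3 by simp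
    finally show "(dist a b / C1^2 - C2 / C1) * real n + (- (C3 / C1 + C2 + C3)) \<le> dist (sm u (sm (of_nat n) a)) (sm u (sm (of_nat n) b))" .
  qed
qed

lemma delta_class:
  assumes "a \<in> (\<lambda>e. x + e) ` E0 sm" "b \<in> (\<lambda>e. y + e) ` E0 sm"
  shows "delta0 sm \<mu> a b = qnorm sm \<mu> (x - y)"
proof -
  obtain e e' where e: "e \<in> Fs" "e' \<in> Fs" "a = x + e" "b = y + e'" using assms E0_eq by auto
  have "a - b = (x - y) + (e - e')" using e by (simp add: algebra_simps)
  then show ?thesis unfolding delta0_eq qnorm_eq using N_inv[OF Fs_diff[OF e(1,2)]] by simp
qed

lemma zero_E0: "0 \<in> E0 sm" using Fs_sub E0_eq unfolding ksubspace_def by simp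

theorem main:
  "lipschitz_equiv C1 (C2 + C3) (\<lambda>x y. qnorm sm \<mu> (x - y))
           (hausdorff_cls (d0 sm \<mu>) (E0 sm))
       \<and> lipschitz_equiv (C1^2) (C1 * C2 + C1 * C3 + C2) (\<lambda>x y. qnorm sm \<mu> (x - y))
           (hausdorff_cls dist (E0 sm))"
proof -
  have c1: "0 < C1" using C1 by simp
  have P1: "hausdorff_cls (d0 sm \<mu>) (E0 sm) x y / C1 - (C2 + C3) \<le> qnorm sm \<mu> (x - y) \<and>
        qnorm sm \<mu> (x - y) \<le> C1 * hausdorff_cls (d0 sm \<mu>) (E0 sm) x y + (C2 + C3)" for x y
  proof -
    define \<delta> where "\<delta> = qnorm sm \<mu> (x - y)"
    have "(\<delta> - C2) / C1 \<le> hausdorff_cls (d0 sm \<mu>) (E0 sm) x y \<and> hausdorff_cls (d0 sm \<mu>) (E0 sm) x y \<le> C1 * (\<delta> + C2)"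
    proof (rule haus_bounds[OF zero_E0])
      fix a b assume ab: "a \<in> (\<lambda>e. x + e) ` E0 sm" "b \<in> (\<lambda>e. y + e) ` E0 sm"
      have d: "delta0 sm \<mu> a b = \<delta>" unfolding \<delta>_def by (rule delta_class[OF ab])
      have u: "\<delta> \<le> C1 * d0 sm \<mu> a b + C2" using delta_d0_up[of a b] d by simp
      have l: "d0 sm \<mu> a b / C1 - C2 \<le> \<delta>" using delta_d0_low[of a b] d by simp
      show "(\<delta> - C2) / C1 \<le> d0 sm \<mu> a b \<and> d0 sm \<mu> a b \<le> C1 * (\<delta> + C2)"
        using u l c1 by (simp add: field_simps)
    qed
    then have h1: "(\<delta> - C2) / C1 \<le> hausdorff_cls (d0 sm \<mu>) (E0 sm) x y"
      and h2: "hausdorff_cls (d0 sm \<mu>) (E0 sm) x y \<le> C1 * (\<delta> + C2)" by auto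
    have "\<delta> - C2 \<le> C1 * hausdorff_cls (d0 sm \<mu>) (E0 sm) x y" using h1 c1 by (simp add: pos_divide_le_eq mult.commute)
    moreover have "hausdorff_cls (d0 sm \<mu>) (E0 sm) x y / C1 \<le> \<delta> + C2" using h2 c1 by (simp add: pos_divide_le_eq mult.commute)
    ultimately show ?thesis unfolding \<delta>_def[symmetric] using C3 by linarith
  qed
  have P2: "hausdorff_cls dist (E0 sm) x y / C1^2 - (C1 * C2 + C1 * C3 + C2) \<le> qnorm sm \<mu> (x - y) \<and>
        qnorm sm \<mu> (x - y) \<le> C1^2 * hausdorff_cls dist (E0 sm) x y + (C1 * C2 + C1 * C3 + C2)" for x y
  proof -
    define \<delta> where "\<delta> = qnorm sm \<mu> (x - y)"
    have c2: "0 < C1^2" using c1 by simp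
    have "(\<delta> - C1 * C2) / C1^2 \<le> hausdorff_cls dist (E0 sm) x y \<and> hausdorff_cls dist (E0 sm) x y \<le> C1^2 * (\<delta> + C2 / C1)"
    proof (rule haus_bounds[OF zero_E0])
      fix a b assume ab: "a \<in> (\<lambda>e. x + e) ` E0 sm" "b \<in> (\<lambda>e. y + e) ` E0 sm"
      have d: "delta0 sm \<mu> a b = \<delta>" unfolding \<delta>_def by (rule delta_class[OF ab])
      have u: "\<delta> \<le> C1^2 * dist a b + C1 * C2" using delta_d_up[of a b] d by simp
      have l: "dist a b / C1^2 - C2 / C1 \<le> \<delta>" using delta_d_low[of a b] d by simp
      have "(\<delta> - C1 * C2) / C1^2 \<le> dist a b" using u c2 by (simp add: pos_divide_le_eq mult.commute)
      moreover have "dist a b \<le> C1^2 * (\<delta> + C2 / C1)" using l c2 by (simp add: pos_divide_le_eq algebra_simps)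
      ultimately show "(\<delta> - C1 * C2) / C1^2 \<le> dist a b \<and> dist a b \<le> C1^2 * (\<delta> + C2 / C1)" by simp
    qed
    then have h1: "(\<delta> - C1 * C2) / C1^2 \<le> hausdorff_cls dist (E0 sm) x y"
      and h2: "hausdorff_cls dist (E0 sm) x y \<le> C1^2 * (\<delta> + C2 / C1)" by auto
    have "\<delta> - C1 * C2 \<le> C1^2 * hausdorff_cls dist (E0 sm) x y" using h1 c2 by (simp add: pos_divide_le_eq mult.commute)
    moreover have "hausdorff_cls dist (E0 sm) x y / C1^2 \<le> \<delta> + C2 / C1" using h2 c2 by (simp add: pos_divide_le_eq mult.commute)
    moreover have "C2 / C1 \<le> C2" using C1 C2 by (simp add: divide_le_eq mult_le_cancel_left1 mult_right_mono)
    moreover have "0 \<le> C1 * C2" "0 \<le> C1 * C3" using C1 C2 C3 by auto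
    ultimately show ?thesis unfolding \<delta>_def[symmetric] using C2 by linarith
  qed
  show ?thesis unfolding lipschitz_equiv_def using P1 P2 by blast
qed

end

theorem proposition7:
  fixes sm :: "'k::{real_normed_div_algebra, euclidean_space} \<Rightarrow> 'e::{metric_space,ab_group_add} \<Rightarrow> 'e"
    and \<mu> :: "'k measure"
    and C0 C1 C2 C3 :: real
  assumes "metric_vector_space sm"
    and "translation_invariant C0 TYPE('e)"
    and "lipschitz_multiplicative C1 C2 C3 sm"
    and "haar_unit_sphere \<mu>"
  shows "lipschitz_equiv C1 (C2 + C3) (\<lambda>x y. qnorm sm \<mu> (x - y))
           (hausdorff_cls (d0 sm \<mu>) (E0 sm))
       \<and> lipschitz_equiv (C1^2) (C1 * C2 + C1 * C3 + C2) (\<lambda>x y. qnorm sm \<mu> (x - y))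
           (hausdorff_cls dist (E0 sm))"
proof -
  interpret pset sm \<mu> C0 C1 C2 C3 using assms by unfold_locales
  show ?thesis by (rule main)
qed

end
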